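(* Let $m$ be an odd integer, $n\ge 0$ an integer, and let $x$ be one of the $n+1$ consecutive odd integers $m,m+2,\ldots,m+2n$. Then these $n+1$ integers can be arranged in a sequence $y_1,y_2,\ldots,y_{n+1}$ (each used exactly once) with $y_{n+1}=x$ such that for every $k=2,\ldots,n+1$, $|y_k-y_{k-1}|=2^{s_k}$ for some integer $s_k\ge 1$. *)

theory Defs
  imports Main
begin

end

theory Submission
  imports Defs
begin

lemma path_ex:
  "0 \<le> j \<Longrightarrow> j \<le> int n \<Longrightarrow> \<exists>xs. distinct xs \<and> set xs = {0..int n} \<and> xs \<noteq> [] \<and> last xs = j
     \<and> hd xs \<ge> int n - 1 \<and> successively (\<lambda>a b. \<bar>a - b\<bar> \<in> {1,2}) xs"
proof (induction n arbitrary: j)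
  case 0
  then show ?case by (intro exI[of _ "[0]"]) auto
next
  case (Suc n)
  show ?case
  proof (cases "j \<le> int n")
    case True
    then obtain xs where xs: "distinct xs" "set xs = {0..int n}" "xs \<noteq> []" "last xs = j"
      "hd xs \<ge> int n - 1" "successively (\<lambda>a b. \<bar>a - b\<bar> \<in> {1,2}) xs"
      using Suc.IH Suc.prems by blast
    have "hd xs \<in> set xs" using xs(3) by simp
    hence "hd xs \<le> int n" using xs(2) by auto
    show ?thesis
    proof (intro exI[of _ "(int n + 1) # xs"] conjI)
      show "distinct ((int n + 1) # xs)" using xs(1,2) by simp
      show "set ((int n + 1) # xs) = {0..int (Suc n)}" using xs(2) by auto
      show "last ((int n + 1) # xs) = j" using xs(3,4) by simp
      show "int (Suc n) - 1 \<le> hd ((int n + 1) # xs)" by simp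
      have "\<bar>(int n + 1) - hd xs\<bar> \<in> {1,2}" using xs(5) \<open>hd xs \<le> int n\<close> by auto
      thus "successively (\<lambda>a b. \<bar>a - b\<bar> \<in> {1,2}) ((int n + 1) # xs)"
        using xs(3,6) by (cases xs) (simp_all only: successively_Cons list.sel(1), blast+)
    qed simp
  next
    case False
    hence j: "j = int n + 1" using Suc.prems by simp
    show ?thesis
    proof (cases n)
      case 0
      then show ?thesis using j by (intro exI[of _ "[0,1]"]) auto
    next
      case (Suc n')
      then obtain xs where xs: "distinct xs" "set xs = {0..int n}" "xs \<noteq> []" "last xs = int n - 1"
        "hd xs \<ge> int n - 1" "successively (\<lambda>a b. \<bar>a - b\<bar> \<in> {1,2}) xs"
        using Suc.IH[of "int n - 1"] by auto
      have "hd xs \<in> set xs" using xs(3) by simp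
      hence h1: "hd xs \<le> int n" using xs(2) by auto
      have "hd xs \<noteq> int n - 1"
      proof
        assume a: "hd xs = int n - 1"
        have "int n \<in> set xs" using xs(2) by auto
        obtain b ys where b0: "xs = b # ys" using xs(3) by (cases xs) auto
        have "ys \<noteq> []"
        proof
          assume "ys = []"
          thus False using b0 a \<open>int n \<in> set xs\<close> by simp
        qed
        note b = b0 this
        hence "last xs \<in> set ys" by simp
        moreover have "b \<notin> set ys" using xs(1) b by simp
        moreover have "last xs = b" using a b xs(4) by simp
        ultimately show False by simp
      qed
      hence hd: "hd xs = int n" using h1 xs(5) by linarith
      show ?thesis
      proof (intro exI[of _ "xs @ [int n + 1]"] conjI)
        show "distinct (xs @ [int n + 1])" using xs(1,2) by simp
        show "set (xs @ [int n + 1]) = {0..int (Suc n)}" using xs(2) by auto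
        show "last (xs @ [int n + 1]) = j" using j by simp
        show "int (Suc n) - 1 \<le> hd (xs @ [int n + 1])" using hd xs(3) by simp
        have "\<bar>last xs - (int n + 1)\<bar> \<in> {1,2}" using xs(4) by simp
        thus "successively (\<lambda>a b. \<bar>a - b\<bar> \<in> {1,2}) (xs @ [int n + 1])"
          using xs(3,6) by (simp only: successively_append_iff successively.simps(2) list.sel(1)) blast
      qed simp
    qed
  qed
qed

theorem lemma4p5:
  fixes m x :: int and n :: nat
  assumes "odd m"
    and "x \<in> {m + 2 * int i | i. i \<le> n}"
  shows "\<exists>ys :: int list. length ys = n + 1 \<and> distinct ys
           \<and> set ys = {m + 2 * int i | i. i \<le> n}
           \<and> last ys = x
           \<and> (\<forall>k. 0 < k \<and> k < n + 1 \<longrightarrow>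
                  (\<exists>s::nat. s \<ge> 1 \<and> \<bar>ys ! k - ys ! (k - 1)\<bar> = 2 ^ s))"
proof -
  obtain i where i: "x = m + 2 * int i" "i \<le> n" using assms(2) by auto
  obtain xs where xs: "distinct xs" "set xs = {0..int n}" "xs \<noteq> []" "last xs = int i"
     "successively (\<lambda>a b. \<bar>a - b\<bar> \<in> {1,2}) xs"
    using path_ex[of "int i" n] i by auto
  have len: "length xs = n + 1"
    using distinct_card[OF xs(1)] xs(2) by simp
  define ys where "ys = map (\<lambda>a. m + 2 * a) xs"
  have "set ys = (\<lambda>a. m + 2 * a) ` {0..int n}" using xs(2) ys_def by simp
  also have "\<dots> = {m + 2 * int i | i. i \<le> n}"
  proof (rule set_eqI, rule iffI)
    fix y assume "y \<in> (\<lambda>a. m + 2 * a) ` {0..int n}"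
    then obtain a where "a \<in> {0..int n}" "y = m + 2 * a" by auto
    thus "y \<in> {m + 2 * int i | i. i \<le> n}"
      by (intro CollectI exI[of _ "nat a"]) auto
  qed auto
  finally have S: "set ys = {m + 2 * int i | i. i \<le> n}" .
  have D: "distinct ys" unfolding ys_def using xs(1)
    by (simp add: distinct_map inj_on_def)
  have L: "last ys = x" unfolding ys_def using xs(3,4) i by (simp add: last_map)
  have St: "\<forall>k. 0 < k \<and> k < n + 1 \<longrightarrow>
                  (\<exists>s::nat. s \<ge> 1 \<and> \<bar>ys ! k - ys ! (k - 1)\<bar> = 2 ^ s)"
  proof (intro allI impI)
    fix k assume k: "0 < k \<and> k < n + 1"
    then obtain k' where k': "k = Suc k'" by (cases k) auto
    have "\<bar>xs ! k' - xs ! Suc k'\<bar> \<in> {1,2}"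
      using successively_nth[OF xs(5), of k'] k k' len by auto
    moreover have "ys ! k - ys ! (k - 1) = 2 * (xs ! Suc k' - xs ! k')"
      unfolding ys_def using k k' len by simp
    ultimately have "\<bar>ys ! k - ys ! (k - 1)\<bar> = 2 ^ 1 \<or> \<bar>ys ! k - ys ! (k - 1)\<bar> = 2 ^ 2"
      by auto
    thus "\<exists>s::nat. s \<ge> 1 \<and> \<bar>ys ! k - ys ! (k - 1)\<bar> = 2 ^ s"
      by (metis one_le_numeral order_refl)
  qed
  show ?thesis
    using len D S L St unfolding ys_def by (intro exI[of _ ys]) (simp add: ys_def)
qed

end
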